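(* (a) For pre-subgroups $f,g$ of $V$ the following are equivalent: (i) $V(f\otimes g)=f\otimes g$; (ii) $H^g\subset H^f$; (iii) $H_f\subset H_g$; (iv) $H^{f,g}=H^f$; (v) $H^{g,f}=H^f$; (vi) $H_{f,g}=H_g$; (vii) $H_{g,f}=H_g$. Write $g\prec f$ when these hold. (b) $\prec$ is a partial order on the set of pre-subgroups of $V$; the fixed vector $e$ is its greatest element and the cofixed vector $\hat e$ its least element.
   Context: Let $\mathcal H$ be a Hilbert space of finite dimension $n\ge1$ (inner products linear in the second variable) and $V$ a multiplicative unitary on $\mathcal H$ ($V_{12}V_{13}V_{23}=V_{23}V_{12}$) of multiplicity 1 (fixed vectors, i.e. $\xi$ with $V(\xi\otimes\eta)=\xi\otimes\eta$ for all $\eta$, form a line; then so do cofixed vectors, i.e. $\xi$ with $V(\eta\otimes\xi)=\eta\otimes\xi$ for all $\eta$). Fix a unit fixed vector $e$ and let $\hat e$ be the unit cofixed vector with $\langle e,\hat e\rangle=n^{-1/2}$. $\omega_{\xi,\eta}(T)=\langle\xi,T\eta\rangle$, $L(\omega)=(\omega\otimes\mathrm{id})(V)$, $\rho(\omega)=(\mathrm{id}\otimes\omega)(V)$. A pre-subgroup is $f\in\mathcal H$ with $\|f\|=1$, $\langle f,e\rangle>0$, $V(f\otimes f)=f\otimes f$; $H^f=\{\eta:V(f\otimes\eta)=f\otimes\eta\}$, $H_f=\{\eta:V(\eta\otimes f)=\eta\otimes f\}$. For pre-subgroups $f,g$, $H^{f,g}$ denotes the range of $L(\omega_{f,g})$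 and $H_{f,g}$ the range of $\rho(\omega_{f,g})$. *)

theory Defs
  imports "HOL-Analysis.Analysis"
begin

text \<open>The Hilbert space H of dimension n = CARD('n) is complex^'n; the inner product
  (linear in the second variable) is cinner. Operators on H (x) H are matrices indexed by 'n \<times> 'n,
  operators on H (x) H (x) H are matrices indexed by 'n \<times> 'n \<times> 'n.\<close>

definition cinner :: "complex^'n::finite \<Rightarrow> complex^'n \<Rightarrow> complex" where
  "cinner x y = (\<Sum>i\<in>UNIV. cnj (x$i) * y$i)"

definition cadj :: "complex^'m^'m \<Rightarrow> complex^'m^'m" where
  "cadj M = (\<chi> i j. cnj (M$j$i))"

definition unitary_op :: "complex^'m^'m \<Rightarrow> bool" where
  "unitary_op M \<longleftrightarrow> cadj M ** M = mat 1 \<and> M ** cadj M = mat 1"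

definition tens :: "complex^'n::finite \<Rightarrow> complex^'n \<Rightarrow> complex^('n \<times> 'n)" where
  "tens x y = (\<chi> p. x$(fst p) * y$(snd p))"

definition leg12 :: "complex^('n::finite\<times>'n)^('n\<times>'n) \<Rightarrow> complex^('n\<times>'n\<times>'n)^('n\<times>'n\<times>'n)" where
  "leg12 V = (\<chi> p q. case p of (i,j,k) \<Rightarrow> case q of (i',j',k') \<Rightarrow> V$(i,j)$(i',j') * (if k = k' then 1 else 0))"

definition leg23 :: "complex^('n::finite\<times>'n)^('n\<times>'n) \<Rightarrow> complex^('n\<times>'n\<times>'n)^('n\<times>'n\<times>'n)" where
  "leg23 V = (\<chi> p q. case p of (i,j,k) \<Rightarrow> case q of (i',j',k') \<Rightarrow> (if i = i' then 1 else 0) * V$(j,k)$(j',k'))"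

definition leg13 :: "complex^('n::finite\<times>'n)^('n\<times>'n) \<Rightarrow> complex^('n\<times>'n\<times>'n)^('n\<times>'n\<times>'n)" where
  "leg13 V = (\<chi> p q. case p of (i,j,k) \<Rightarrow> case q of (i',j',k') \<Rightarrow> V$(i,k)$(i',k') * (if j = j' then 1 else 0))"

definition multiplicative_unitary :: "complex^('n::finite\<times>'n)^('n\<times>'n) \<Rightarrow> bool" where
  "multiplicative_unitary V \<longleftrightarrow> unitary_op V \<and>
     leg12 V ** leg13 V ** leg23 V = leg23 V ** leg12 V"

definition fixed_vec :: "complex^('n::finite\<times>'n)^('n\<times>'n) \<Rightarrow> complex^'n \<Rightarrow> bool" where
  "fixed_vec V \<xi> \<longleftrightarrow> (\<forall>\<eta>. V *v tens \<xi> \<eta> = tens \<xi> \<eta>)"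

definition cofixed_vec :: "complex^('n::finite\<times>'n)^('n\<times>'n) \<Rightarrow> complex^'n \<Rightarrow> bool" where
  "cofixed_vec V \<xi> \<longleftrightarrow> (\<forall>\<eta>. V *v tens \<eta> \<xi> = tens \<eta> \<xi>)"

definition multiplicity_one :: "complex^('n::finite\<times>'n)^('n\<times>'n) \<Rightarrow> bool" where
  "multiplicity_one V \<longleftrightarrow>
     (\<exists>\<xi>. \<xi> \<noteq> 0 \<and> {x. fixed_vec V x} = range (\<lambda>c::complex. c *s \<xi>))"

text \<open>L(omega_{xi,eta}) = (omega_{xi,eta} (x) id)(V), characterised by
  <a, L b> = <xi (x) a, V (eta (x) b)>.\<close>
definition Lw :: "complex^('n::finite\<times>'n)^('n\<times>'n) \<Rightarrow> complex^'n \<Rightarrow> complex^'n \<Rightarrow> complex^'n^'n" where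
  "Lw V \<xi> \<eta> = (\<chi> a b. \<Sum>i\<in>UNIV. \<Sum>i'\<in>UNIV. cnj (\<xi>$i) * V$(i,a)$(i',b) * \<eta>$i')"

text \<open>rho(omega_{xi,eta}) = (id (x) omega_{xi,eta})(V), characterised by
  <a, rho b> = <a (x) xi, V (b (x) eta)>.\<close>
definition \<rho>w :: "complex^('n::finite\<times>'n)^('n\<times>'n) \<Rightarrow> complex^'n \<Rightarrow> complex^'n \<Rightarrow> complex^'n^'n" where
  "\<rho>w V \<xi> \<eta> = (\<chi> a b. \<Sum>j\<in>UNIV. \<Sum>j'\<in>UNIV. cnj (\<xi>$j) * V$(a,j)$(b,j') * \<eta>$j')"

definition pre_subgroup :: "complex^('n::finite\<times>'n)^('n\<times>'n) \<Rightarrow> complex^'n \<Rightarrow> complex^'n \<Rightarrow> bool" where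
  "pre_subgroup V e f \<longleftrightarrow> norm f = 1 \<and> Im (cinner f e) = 0 \<and> Re (cinner f e) > 0
     \<and> V *v tens f f = tens f f"

definition Hup :: "complex^('n::finite\<times>'n)^('n\<times>'n) \<Rightarrow> complex^'n \<Rightarrow> (complex^'n) set" where
  "Hup V f = {\<eta>. V *v tens f \<eta> = tens f \<eta>}"

definition Hdown :: "complex^('n::finite\<times>'n)^('n\<times>'n) \<Rightarrow> complex^'n \<Rightarrow> (complex^'n) set" where
  "Hdown V f = {\<eta>. V *v tens \<eta> f = tens \<eta> f}"

definition Hup2 :: "complex^('n::finite\<times>'n)^('n\<times>'n) \<Rightarrow> complex^'n \<Rightarrow> complex^'n \<Rightarrow> (complex^'n) set" where
  "Hup2 V f g = range (\<lambda>x. Lw V f g *v x)"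

definition Hdown2 :: "complex^('n::finite\<times>'n)^('n\<times>'n) \<Rightarrow> complex^'n \<Rightarrow> complex^'n \<Rightarrow> (complex^'n) set" where
  "Hdown2 V f g = range (\<lambda>x. \<rho>w V f g *v x)"

definition sg_le :: "complex^('n::finite\<times>'n)^('n\<times>'n) \<Rightarrow> complex^'n \<Rightarrow> complex^'n \<Rightarrow> bool" where
  "sg_le V g f \<longleftrightarrow> V *v tens f g = tens f g"

end

theory Submission
  imports Defs
begin


lemma sum_pair: "(\<Sum>p\<in>UNIV. F p) = (\<Sum>i\<in>UNIV. \<Sum>j\<in>UNIV. F (i,j))"
  by (subst sum.cartesian_product) (simp add: UNIV_Times_UNIV case_prod_eta)

lemma cinner_add_right: "cinner x (y + z) = cinner x y + cinner x z"
  by (simp add: cinner_def sum.distrib distrib_left)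
lemma cinner_add_left: "cinner (x + y) z = cinner x z + cinner y z"
  by (simp add: cinner_def sum.distrib distrib_right)
lemma cinner_diff_right: "cinner x (y - z) = cinner x y - cinner x z"
  by (simp add: cinner_def sum_subtractf right_diff_distrib)
lemma cinner_diff_left: "cinner (x - y) z = cinner x z - cinner y z"
  by (simp add: cinner_def sum_subtractf left_diff_distrib)
lemma cinner_scale_right: "cinner x (c *s y) = c * cinner x y"
  by (simp add: cinner_def sum_distrib_left mult_ac)
lemma cinner_scale_left: "cinner (c *s x) y = cnj c * cinner x y"
  by (simp add: cinner_def sum_distrib_left mult_ac)
lemma cinner_commute: "cinner y x = cnj (cinner x y)"
  by (simp add: cinner_def mult.commute)
lemma cinner_self: "cinner x x = complex_of_real ((norm x)^2)"
proof -
  have "cinner x x = (\<Sum>i\<in>UNIV. complex_of_real ((norm (x$i))^2))"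
    unfolding cinner_def by (rule sum.cong) (simp_all only: complex_norm_square mult.commute)

  also have "\<dots> = complex_of_real (\<Sum>i\<in>UNIV. (norm (x$i))^2)" by simp
  also have "(\<Sum>i\<in>UNIV. (norm (x$i))^2) = (norm x)^2"
    by (simp add: norm_vec_def L2_set_def sum_nonneg)
  finally show ?thesis .
qed
lemma cinner_self_eq0: "cinner x x = 0 \<longleftrightarrow> x = 0"
  by (simp add: cinner_self)
lemma cinner_zero_right[simp]: "cinner x 0 = 0" by (simp add: cinner_def)
lemma cinner_zero_left[simp]: "cinner 0 x = 0" by (simp add: cinner_def)

lemma cinner_axis: "cinner (axis i 1) x = x$i"
proof -
  have "cinner (axis i 1) x = (\<Sum>j\<in>UNIV. if j = i then x$j else 0)"
    unfolding cinner_def axis_def by (rule sum.cong) auto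
  then show ?thesis by simp
qed

lemma vec_eq_cinner: "(\<And>a. cinner a x = cinner a y) \<Longrightarrow> x = y"
  by (metis cinner_axis vec_eq_iff)

lemma tens_nth[simp]: "tens a b $ (i,j) = a$i * b$j"
  by (simp add: tens_def)

lemma cinner_tens: "cinner (tens a b) (tens c d) = cinner a c * cinner b d"
  by (simp add: cinner_def sum_pair sum_product mult_ac)



lemma mv_scale: "(M::complex^'m^'k) *v (c *s x) = c *s (M *v x)"
  by (simp add: vec_eq_iff matrix_vector_mult_def sum_distrib_left mult_ac)

lemma cinner_adj: "cinner x ((M::complex^'m^'m) *v y) = cinner (cadj M *v x) y"
proof -
  have "cinner x (M *v y) = (\<Sum>i\<in>UNIV. \<Sum>j\<in>UNIV. cnj (x$i) * M$i$j * y$j)"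
    by (simp add: cinner_def matrix_vector_mult_def sum_distrib_left mult_ac)
  also have "\<dots> = (\<Sum>j\<in>UNIV. \<Sum>i\<in>UNIV. cnj (x$i) * M$i$j * y$j)"
    by (rule sum.swap)
  also have "\<dots> = cinner (cadj M *v x) y"
    by (simp add: cinner_def matrix_vector_mult_def cadj_def sum_distrib_right sum_distrib_left mult_ac)
  finally show ?thesis .
qed

lemma cadj_cadj[simp]: "cadj (cadj M) = M"
  by (simp add: cadj_def vec_eq_iff)

definition cl :: "complex^'n::finite \<Rightarrow> complex^('n\<times>'n) \<Rightarrow> complex^'n" where
  "cl \<xi> W = (\<chi> j. \<Sum>i\<in>UNIV. cnj (\<xi>$i) * W$(i,j))"
definition cr :: "complex^'n::finite \<Rightarrow> complex^('n\<times>'n) \<Rightarrow> complex^'n" where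
  "cr \<xi> W = (\<chi> i. \<Sum>j\<in>UNIV. cnj (\<xi>$j) * W$(i,j))"

lemma cinner_cl: "cinner a (cl \<xi> W) = cinner (tens \<xi> a) W"
proof -
  have "cinner a (cl \<xi> W) = (\<Sum>j\<in>UNIV. \<Sum>i\<in>UNIV. cnj (a$j) * cnj (\<xi>$i) * W$(i,j))"
    by (simp add: cinner_def cl_def sum_distrib_left mult_ac)
  also have "\<dots> = (\<Sum>i\<in>UNIV. \<Sum>j\<in>UNIV. cnj (a$j) * cnj (\<xi>$i) * W$(i,j))"
    by (rule sum.swap)
  also have "\<dots> = cinner (tens \<xi> a) W"
    by (simp add: cinner_def sum_pair mult_ac)
  finally show ?thesis .
qed

lemma cinner_cr: "cinner a (cr \<xi> W) = cinner (tens a \<xi>) W"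
  by (simp add: cinner_def cr_def sum_pair sum_distrib_left mult_ac)

lemma cl_tens: "cl \<xi> (tens x y) = cinner \<xi> x *s y"
  by (simp add: vec_eq_iff cl_def cinner_def sum_distrib_right sum_distrib_left mult_ac)
lemma cr_tens: "cr \<xi> (tens x y) = cinner \<xi> y *s x"
  by (simp add: vec_eq_iff cr_def cinner_def sum_distrib_right sum_distrib_left mult_ac)

lemma Lw_apply: "Lw V \<xi> \<eta> *v b = cl \<xi> (V *v tens \<eta> b)"
  by (rule vec_eq_cinner) (simp add: cinner_cl cinner_def cl_def Lw_def matrix_vector_mult_def sum_pair
        sum_distrib_left sum_distrib_right mult_ac, subst sum.swap, rule sum.cong[OF refl], subst sum.swap, simp)

lemma \<rho>w_apply: "\<rho>w V \<xi> \<eta> *v b = cr \<xi> (V *v tens b \<eta>)"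
  by (rule vec_eq_cinner) (simp add: cinner_cr cinner_def cr_def \<rho>w_def matrix_vector_mult_def sum_pair
        sum_distrib_left sum_distrib_right mult_ac, rule sum.cong[OF refl], subst sum.swap, simp)

lemma tens_scale_left: "tens (c *s x) y = c *s tens x y"
  by (simp add: vec_eq_iff mult_ac)
lemma tens_scale_right: "tens x (c *s y) = c *s tens x y"
  by (simp add: vec_eq_iff mult_ac)
lemma tens_add_left: "tens (x + x') y = tens x y + tens x' y"
  by (simp add: vec_eq_iff algebra_simps)
lemma tens_add_right: "tens x (y + y') = tens x y + tens x y'"
  by (simp add: vec_eq_iff algebra_simps)
lemma tens_diff_left: "tens (x - x') y = tens x y - tens x' y"
  by (simp add: vec_eq_iff algebra_simps)
lemma tens_diff_right: "tens x (y - y') = tens x y - tens x y'"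
  by (simp add: vec_eq_iff algebra_simps)
lemma tens_zero_left[simp]: "tens 0 y = 0" by (simp add: vec_eq_iff)
lemma tens_zero_right[simp]: "tens x 0 = 0" by (simp add: vec_eq_iff)

lemma cl_scale: "cl \<xi> (c *s W) = c *s cl \<xi> W"
  by (simp add: vec_eq_iff cl_def sum_distrib_left mult_ac)
lemma cr_scale: "cr \<xi> (c *s W) = c *s cr \<xi> W"
  by (simp add: vec_eq_iff cr_def sum_distrib_left mult_ac)



lemma sum_triple: "(\<Sum>p\<in>UNIV. F p) = (\<Sum>i\<in>UNIV. \<Sum>j\<in>UNIV. \<Sum>k\<in>UNIV. F (i,j,k))"
  by (simp add: sum_pair[of F] sum_pair[of "\<lambda>q. F (_, q)"])

lemma if01[simp]: "(a::complex) * (if P then 1 else 0) = (if P then a else 0)"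
  "(if P then 1 else 0) * (a::complex) = (if P then a else 0)"
  "(if P then (a::complex) else 0) * b = (if P then a * b else 0)"
  "b * (if P then (a::complex) else 0) = (if P then b * a else 0)"
  by auto
lemma sum_if_cond[simp]: "(\<Sum>x\<in>A. if P then f x else 0) = (if P then \<Sum>x\<in>A. f x else 0)"
  by auto

definition t3 :: "complex^'n::finite \<Rightarrow> complex^'n \<Rightarrow> complex^'n \<Rightarrow> complex^('n\<times>'n\<times>'n)" where
  "t3 a b c = (\<chi> p. a$(fst p) * b$(fst (snd p)) * c$(snd (snd p)))"

lemma t3_nth[simp]: "t3 a b c $ (i,j,k) = a$i * b$j * c$k"
  by (simp add: t3_def)

lemma leg12_act: "(leg12 M *v X) $ (i,j,k) = (\<Sum>p\<in>UNIV. \<Sum>q\<in>UNIV. M$(i,j)$(p,q) * X$(p,q,k))"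
  by (simp add: matrix_vector_mult_def leg12_def sum_triple)

lemma leg13_act: "(leg13 M *v X) $ (i,j,k) = (\<Sum>p\<in>UNIV. \<Sum>r\<in>UNIV. M$(i,k)$(p,r) * X$(p,j,r))"
  by (simp add: matrix_vector_mult_def leg13_def sum_triple)

lemma leg23_act: "(leg23 M *v X) $ (i,j,k) = (\<Sum>q\<in>UNIV. \<Sum>r\<in>UNIV. M$(j,k)$(q,r) * X$(i,q,r))"
  by (simp add: matrix_vector_mult_def leg23_def sum_triple)

lemma vec3_eqI: "(\<And>i j k. X$(i,j,k) = Y$(i,j,k)) \<Longrightarrow> X = Y"
  by (simp add: vec_eq_iff split_paired_all)

lemma leg12_act': "(leg12 M *v X) $ (i,j,k) = (\<Sum>c\<in>UNIV. M$(i,j)$c * X$(fst c,snd c,k))"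
  by (simp add: leg12_act sum_pair[of "\<lambda>c. M$(i,j)$c * X$(fst c,snd c,k)"])
lemma leg23_act': "(leg23 M *v X) $ (i,c) = (\<Sum>d\<in>UNIV. M$c$d * X$(i,d))"
  by (cases c) (simp add: leg23_act sum_pair[of "\<lambda>d. M$_$d * X$(i,d)"])

lemma leg12_comp: "leg12 A *v (leg12 B *v X) = leg12 (A ** B) *v X"
proof (rule vec3_eqI)
  fix i j k
  have "(leg12 A *v (leg12 B *v X)) $ (i,j,k) = (\<Sum>c\<in>UNIV. \<Sum>d\<in>UNIV. A$(i,j)$c * B$c$d * X$(fst d,snd d,k))"
    by (simp add: leg12_act' sum_distrib_left mult_ac)
  also have "\<dots> = (\<Sum>d\<in>UNIV. \<Sum>c\<in>UNIV. A$(i,j)$c * B$c$d * X$(fst d,snd d,k))"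
    by (rule sum.swap)
  also have "\<dots> = (leg12 (A ** B) *v X) $ (i,j,k)"
    by (simp add: leg12_act' matrix_matrix_mult_def sum_distrib_right sum_distrib_left mult_ac)
  finally show "(leg12 A *v (leg12 B *v X)) $ (i,j,k) = (leg12 (A ** B) *v X) $ (i,j,k)" .
qed

lemma leg23_comp: "leg23 A *v (leg23 B *v X) = leg23 (A ** B) *v X"
proof (rule vec3_eqI)
  fix i j k
  have "(leg23 A *v (leg23 B *v X)) $ (i,j,k) = (\<Sum>c\<in>UNIV. \<Sum>d\<in>UNIV. A$(j,k)$c * B$c$d * X$(i,d))"
    by (simp only: leg23_act' sum_distrib_left mult_ac)
  also have "\<dots> = (\<Sum>d\<in>UNIV. \<Sum>c\<in>UNIV. A$(j,k)$c * B$c$d * X$(i,d))"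
    by (rule sum.swap)
  also have "\<dots> = (leg23 (A ** B) *v X) $ (i,j,k)"
    by (simp only: leg23_act' matrix_matrix_mult_def sum_distrib_right sum_distrib_left mult_ac vec_lambda_beta)
  finally show "(leg23 A *v (leg23 B *v X)) $ (i,j,k) = (leg23 (A ** B) *v X) $ (i,j,k)" .
qed

lemma leg12_id: "leg12 (mat 1) *v X = X"
proof (rule vec3_eqI)
  fix i j k
  have "(leg12 (mat 1) *v X) $ (i,j,k) = (\<Sum>c\<in>UNIV. (if (i,j) = c then X$(fst c,snd c,k) else 0))"
    unfolding leg12_act' by (rule sum.cong) (auto simp: mat_def)
  then show "(leg12 (mat 1) *v X) $ (i,j,k) = X $ (i,j,k)" by simp
qed
lemma leg23_id: "leg23 (mat 1) *v X = X"
proof (rule vec3_eqI)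
  fix i j k
  have "(leg23 (mat 1) *v X) $ (i,j,k) = (\<Sum>c\<in>UNIV. (if (j,k) = c then X$(i,c) else 0))"
    unfolding leg23_act' by (rule sum.cong) (auto simp: mat_def)
  then show "(leg23 (mat 1) *v X) $ (i,j,k) = X $ (i,j,k)" by simp
qed

lemma cadj_leg12: "cadj (leg12 M) = leg12 (cadj M)"
  by (simp add: cadj_def leg12_def vec_eq_iff split_paired_all)
lemma cadj_leg23: "cadj (leg23 M) = leg23 (cadj M)"
  by (simp add: cadj_def leg23_def vec_eq_iff split_paired_all)

lemma leg12_t3: "leg12 M *v t3 a b c = (\<chi> p. (M *v tens a b)$(fst p, fst (snd p)) * c$(snd (snd p)))"
  by (rule vec3_eqI, simp only: leg12_act', simp add: matrix_vector_mult_def tens_def t3_def sum_distrib_right sum_distrib_left mult_ac)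
lemma leg23_t3: "leg23 M *v t3 a b c = (\<chi> p. a$(fst p) * (M *v tens b c)$(snd p))"
  by (rule vec3_eqI, simp only: leg23_act', simp add: matrix_vector_mult_def tens_def t3_def sum_distrib_right sum_distrib_left mult_ac)
lemma leg13_t3: "leg13 M *v t3 a b c = (\<chi> p. (M *v tens a c)$(fst p, snd (snd p)) * b$(fst (snd p)))"
  by (rule vec3_eqI, simp only: leg13_act, simp add: matrix_vector_mult_def tens_def sum_pair sum_distrib_right sum_distrib_left mult_ac)



lemma swap3: "(\<Sum>j\<in>A. \<Sum>k\<in>B. \<Sum>p\<in>C. F j k p) = (\<Sum>k\<in>B. \<Sum>p\<in>C. \<Sum>j\<in>A. F j k p)"
proof -
  have "(\<Sum>j\<in>A. \<Sum>k\<in>B. \<Sum>p\<in>C. F j k p) = (\<Sum>k\<in>B. \<Sum>j\<in>A. \<Sum>p\<in>C. F j k p)" by (rule sum.swap)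
  also have "\<dots> = (\<Sum>k\<in>B. \<Sum>p\<in>C. \<Sum>j\<in>A. F j k p)" by (rule sum.cong[OF refl], rule sum.swap)
  finally show ?thesis .
qed

lemma swap4: "(\<Sum>j\<in>A. \<Sum>k\<in>B. \<Sum>p\<in>C. \<Sum>r\<in>D. F j k p r) = (\<Sum>k\<in>B. \<Sum>p\<in>C. \<Sum>r\<in>D. \<Sum>j\<in>A. F j k p r)"
proof -
  have "(\<Sum>j\<in>A. \<Sum>k\<in>B. \<Sum>p\<in>C. \<Sum>r\<in>D. F j k p r) = (\<Sum>k\<in>B. \<Sum>j\<in>A. \<Sum>p\<in>C. \<Sum>r\<in>D. F j k p r)" by (rule sum.swap)
  also have "\<dots> = (\<Sum>k\<in>B. \<Sum>p\<in>C. \<Sum>r\<in>D. \<Sum>j\<in>A. F j k p r)" by (rule sum.cong[OF refl], rule swap3)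
  finally show ?thesis .
qed

lemma cnj_sum': "cnj (\<Sum>i\<in>A. f i) = (\<Sum>i\<in>A. cnj (f i))"
  by (rule cnj_sum)

lemma mv_tens_nth: "((M::complex^('n::finite\<times>'n)^('n\<times>'n)) *v tens u v) $ q = (\<Sum>p\<in>UNIV. \<Sum>r\<in>UNIV. M$q$(p,r) * u$p * v$r)"
  by (simp add: matrix_vector_mult_def sum_pair mult_ac)

lemma A_gen: "cinner (t3 x y z) (leg13 M *v (\<chi> p. u$(fst p) * W$(snd p))) = cinner (tens x z) (M *v tens u (cl y W))"
proof -
  have "cinner (t3 x y z) (leg13 M *v (\<chi> p. u$(fst p) * W$(snd p))) =
     (\<Sum>i\<in>UNIV. \<Sum>j\<in>UNIV. \<Sum>k\<in>UNIV. \<Sum>p\<in>UNIV. \<Sum>r\<in>UNIV. cnj (x$i) * cnj (y$j) * cnj (z$k) * M$(i,k)$(p,r) * u$p * W$(j,r))"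
    by (simp add: cinner_def sum_triple leg13_act sum_distrib_left mult_ac)
  also have "\<dots> = (\<Sum>i\<in>UNIV. \<Sum>k\<in>UNIV. \<Sum>p\<in>UNIV. \<Sum>r\<in>UNIV. \<Sum>j\<in>UNIV. cnj (x$i) * cnj (y$j) * cnj (z$k) * M$(i,k)$(p,r) * u$p * W$(j,r))"
    by (rule sum.cong[OF refl], rule swap4)
  also have "\<dots> = cinner (tens x z) (M *v tens u (cl y W))"
    by (simp add: cinner_def sum_pair mv_tens_nth cl_def sum_distrib_left sum_distrib_right mult_ac)
  finally show ?thesis .
qed

lemma E_gen: "cinner (\<chi> p. W'$(fst p, fst (snd p)) * a$(snd (snd p))) (\<chi> p. u$(fst p) * W$(snd p)) = cinner (tens (cl u W') a) W"
proof -
  have "cinner (\<chi> p. W'$(fst p, fst (snd p)) * a$(snd (snd p))) (\<chi> p. u$(fst p) * W$(snd p)) =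
     (\<Sum>i\<in>UNIV. \<Sum>j\<in>UNIV. \<Sum>k\<in>UNIV. cnj (W'$(i,j)) * cnj (a$k) * u$i * W$(j,k))"
    by (simp add: cinner_def sum_triple mult_ac)
  also have "\<dots> = (\<Sum>j\<in>UNIV. \<Sum>k\<in>UNIV. \<Sum>i\<in>UNIV. cnj (W'$(i,j)) * cnj (a$k) * u$i * W$(j,k))"
    by (rule swap3)
  also have "\<dots> = cinner (tens (cl u W') a) W"
    by (simp add: cinner_def sum_pair cl_def cnj_sum sum_distrib_left sum_distrib_right mult_ac)
  finally show ?thesis .
qed

lemma A'_gen: "cinner (t3 x y z) (leg12 M *v (\<chi> p. W$(fst p, snd (snd p)) * u$(fst (snd p)))) = cinner (tens x y) (M *v tens (cr z W) u)"
proof -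
  have "cinner (t3 x y z) (leg12 M *v (\<chi> p. W$(fst p, snd (snd p)) * u$(fst (snd p)))) =
     (\<Sum>i\<in>UNIV. \<Sum>j\<in>UNIV. \<Sum>k\<in>UNIV. \<Sum>p\<in>UNIV. \<Sum>q\<in>UNIV. cnj (x$i) * cnj (y$j) * cnj (z$k) * M$(i,j)$(p,q) * W$(p,k) * u$q)"
    by (simp add: cinner_def sum_triple leg12_act sum_distrib_left mult_ac)
  also have "\<dots> = (\<Sum>i\<in>UNIV. \<Sum>j\<in>UNIV. \<Sum>p\<in>UNIV. \<Sum>q\<in>UNIV. \<Sum>k\<in>UNIV. cnj (x$i) * cnj (y$j) * cnj (z$k) * M$(i,j)$(p,q) * W$(p,k) * u$q)"
    by (rule sum.cong[OF refl], rule sum.cong[OF refl], rule swap3)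
  also have "\<dots> = cinner (tens x y) (M *v tens (cr z W) u)"
    by (simp add: cinner_def sum_pair mv_tens_nth cr_def sum_distrib_left sum_distrib_right mult_ac)
  finally show ?thesis .
qed

lemma E'_gen: "cinner (t3 x y z) (leg12 M *v (\<chi> p. u$(fst p) * W$(snd p))) = cinner (tens x y) (M *v tens u (cr z W))"
proof -
  have "cinner (t3 x y z) (leg12 M *v (\<chi> p. u$(fst p) * W$(snd p))) =
     (\<Sum>i\<in>UNIV. \<Sum>j\<in>UNIV. \<Sum>k\<in>UNIV. \<Sum>p\<in>UNIV. \<Sum>q\<in>UNIV. cnj (x$i) * cnj (y$j) * cnj (z$k) * M$(i,j)$(p,q) * u$p * W$(q,k))"
    by (simp add: cinner_def sum_triple leg12_act sum_distrib_left mult_ac)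
  also have "\<dots> = (\<Sum>i\<in>UNIV. \<Sum>j\<in>UNIV. \<Sum>p\<in>UNIV. \<Sum>q\<in>UNIV. \<Sum>k\<in>UNIV. cnj (x$i) * cnj (y$j) * cnj (z$k) * M$(i,j)$(p,q) * u$p * W$(q,k))"
    by (rule sum.cong[OF refl], rule sum.cong[OF refl], rule swap3)
  also have "\<dots> = cinner (tens x y) (M *v tens u (cr z W))"
    by (simp add: cinner_def sum_pair mv_tens_nth cr_def sum_distrib_left sum_distrib_right mult_ac)
  finally show ?thesis .
qed



locale MU =
  fixes V :: "complex^('n::finite\<times>'n)^('n\<times>'n)"
  assumes unit: "unitary_op V"
    and pent: "leg12 V ** leg13 V ** leg23 V = leg23 V ** leg12 V"
begin

lemma adjV: "cadj V *v (V *v x) = x"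
  using unit by (simp add: unitary_op_def matrix_vector_mul_assoc)
lemma Vadj: "V *v (cadj V *v x) = x"
  using unit by (simp add: unitary_op_def matrix_vector_mul_assoc)
lemma Vinner: "cinner (V *v x) (V *v y) = cinner x y"
  by (simp add: cinner_adj[of "V *v x"] adjV)
lemma fix_adj: "V *v w = w \<Longrightarrow> cadj V *v w = w"
  by (metis adjV)
lemma inner_Vadj: "cinner x (cadj V *v y) = cinner (V *v x) y"
  by (simp add: cinner_adj)

lemma fix_crit:
  assumes "Re (cinner w (V *v w)) = Re (cinner w w)"
  shows "V *v w = w"
proof -
  let ?d = "V *v w - w"
  have "cinner ?d ?d = cinner (V *v w) (V *v w) - cinner (V *v w) w - cinner w (V *v w) + cinner w w"
    by (simp add: cinner_diff_left cinner_diff_right)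
  also have "\<dots> = 2 * cinner w w - (cinner w (V *v w) + cnj (cinner w (V *v w)))"
    by (simp add: Vinner cinner_commute[of "V *v w" w])
  finally have "Re (cinner ?d ?d) = 0" using assms by simp
  then have "(norm ?d)^2 = 0" by (simp add: cinner_self)
  then show ?thesis by simp
qed

lemma pent_vec: "leg12 V *v (leg13 V *v (leg23 V *v X)) = leg23 V *v (leg12 V *v X)"
  using pent by (simp add: matrix_vector_mul_assoc matrix_mul_assoc)

lemma leg12_inv: "leg12 (cadj V) *v (leg12 V *v X) = X"
  using unit by (simp add: leg12_comp unitary_op_def leg12_id)
lemma leg23_inv: "leg23 V *v (leg23 (cadj V) *v X) = X"
  using unit by (simp add: leg23_comp unitary_op_def leg23_id)

lemma leg12_fix: "M *v tens a b = tens a b \<Longrightarrow> leg12 M *v t3 a b c = t3 a b c"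
  by (rule vec3_eqI) (simp add: leg12_t3)
lemma leg23_fix: "M *v tens b c = tens b c \<Longrightarrow> leg23 M *v t3 a b c = t3 a b c"
  by (rule vec3_eqI) (simp add: leg23_t3)

lemma P1:
  assumes ab: "V *v tens a b = tens a b" and bc: "V *v tens b c = tens b c" and b0: "b \<noteq> 0"
  shows "V *v tens a c = tens a c"
proof -
  let ?t = "t3 a b c"
  have h1: "leg23 V *v ?t = ?t" using bc by (rule leg23_fix)
  have h2: "leg12 V *v ?t = ?t" using ab by (rule leg12_fix)
  have h2': "leg12 (cadj V) *v ?t = ?t" using fix_adj[OF ab] by (rule leg12_fix)
  have h3: "leg12 V *v (leg13 V *v ?t) = ?t" using pent_vec[of ?t] h1 h2 by simp
  have h4: "leg13 V *v ?t = ?t"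
    using arg_cong[OF h3, of "\<lambda>X. leg12 (cadj V) *v X"] by (simp add: leg12_inv h2')
  obtain j where bj: "b$j \<noteq> 0" using b0 by (auto simp: vec_eq_iff)
  have "\<And>i k. (V *v tens a c)$(i,k) * b$j = a$i * b$j * c$k"
    using arg_cong[OF h4, of "\<lambda>X. X$(_,j,_)"] by (simp add: leg13_t3)
  then have "\<And>i k. (V *v tens a c)$(i,k) = a$i * c$k"
    using bj by (metis (no_types, lifting) mult.commute mult.left_commute mult_cancel_left)
  then show ?thesis by (simp add: vec_eq_iff split_paired_all)
qed

lemma LI:
  assumes fx: "V *v tens \<eta>1 \<eta>2 = tens \<eta>1 \<eta>2"
  shows "Lw V \<xi>1 \<eta>1 *v (Lw V \<xi>2 \<eta>2 *v b) = Lw V (cl \<eta>1 (V *v tens \<xi>1 \<xi>2)) \<eta>2 *v b"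
proof (rule vec_eq_cinner)
  fix a
  let ?X0 = "t3 \<eta>1 \<eta>2 b"
  let ?W = "V *v tens \<eta>2 b"
  have s1: "leg23 V *v ?X0 = (\<chi> p. \<eta>1$(fst p) * ?W$(snd p))" by (simp add: leg23_t3)
  have s2: "leg12 V *v ?X0 = ?X0" using fx by (rule leg12_fix)
  have A: "cinner a (Lw V \<xi>1 \<eta>1 *v (Lw V \<xi>2 \<eta>2 *v b)) = cinner (t3 \<xi>1 \<xi>2 a) (leg13 V *v (leg23 V *v ?X0))"
    by (simp add: s1 A_gen Lw_apply cinner_cl)
  have B: "leg13 V *v (leg23 V *v ?X0) = leg12 (cadj V) *v (leg23 V *v (leg12 V *v ?X0))"
    using arg_cong[OF pent_vec[of ?X0], of "\<lambda>X. leg12 (cadj V) *v X"] by (simp add: leg12_inv)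
  have C: "\<And>Y. cinner (t3 \<xi>1 \<xi>2 a) (leg12 (cadj V) *v Y) = cinner (leg12 V *v t3 \<xi>1 \<xi>2 a) Y"
    by (simp add: cinner_adj cadj_leg12)
  show "cinner a (Lw V \<xi>1 \<eta>1 *v (Lw V \<xi>2 \<eta>2 *v b)) = cinner a (Lw V (cl \<eta>1 (V *v tens \<xi>1 \<xi>2)) \<eta>2 *v b)"
    unfolding A unfolding B unfolding C unfolding s2 s1 by (simp add: leg12_t3 E_gen Lw_apply cinner_cl)
qed

lemma RI:
  assumes fx: "V *v tens \<xi>1 \<xi>2 = tens \<xi>1 \<xi>2"
  shows "\<rho>w V \<xi>1 \<eta>1 *v (\<rho>w V \<xi>2 \<eta>2 *v b) = \<rho>w V \<xi>1 (cr \<xi>2 (cadj V *v tens \<eta>1 \<eta>2)) *v b"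
proof (rule vec_eq_cinner)
  fix a
  let ?X0 = "t3 b \<eta>1 \<eta>2"
  let ?W = "V *v tens b \<eta>2"
  let ?Y = "leg23 (cadj V) *v ?X0"
  have A: "cinner a (\<rho>w V \<xi>1 \<eta>1 *v (\<rho>w V \<xi>2 \<eta>2 *v b)) = cinner (t3 a \<xi>1 \<xi>2) (leg12 V *v (leg13 V *v ?X0))"
    by (simp add: leg13_t3 A'_gen \<rho>w_apply cinner_cr)
  have B: "leg12 V *v (leg13 V *v ?X0) = leg23 V *v (leg12 V *v ?Y)"
    using pent_vec[of ?Y] by (simp add: leg23_inv)
  have C: "\<And>Z. cinner (t3 a \<xi>1 \<xi>2) (leg23 V *v Z) = cinner (t3 a \<xi>1 \<xi>2) Z"
    by (simp add: cinner_adj cadj_leg23 leg23_fix[OF fix_adj[OF fx]])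
  have D: "?Y = (\<chi> p. b$(fst p) * (cadj V *v tens \<eta>1 \<eta>2)$(snd p))" by (simp add: leg23_t3)
  show "cinner a (\<rho>w V \<xi>1 \<eta>1 *v (\<rho>w V \<xi>2 \<eta>2 *v b)) = cinner a (\<rho>w V \<xi>1 (cr \<xi>2 (cadj V *v tens \<eta>1 \<eta>2)) *v b)"
    unfolding A unfolding B unfolding C unfolding D by (simp add: E'_gen \<rho>w_apply cinner_cr)
qed

end


lemma cs_eq:
  assumes "cinner x x = cnj c * c" "cinner f x = c" "cinner f f = 1"
  shows "x = c *s f"
proof -
  have xf: "cinner x f = cnj c" using assms(2) cinner_commute[of x f] by simp
  have "cinner (x - c *s f) (x - c *s f) = 0"
    by (simp add: cinner_diff_left cinner_diff_right cinner_scale_left cinner_scale_right assms xf)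
  then show ?thesis by (simp add: cinner_self_eq0)
qed

lemma mv_diff: "(M::complex^'m^'k) *v (x - y) = M *v x - M *v y"
  by (simp add: matrix_vector_mult_diff_distrib)

context MU
begin

lemma L_inner: "cinner a (Lw V \<xi> \<eta> *v b) = cinner (tens \<xi> a) (V *v tens \<eta> b)"
  by (simp add: Lw_apply cinner_cl)
lemma R_inner: "cinner a (\<rho>w V \<xi> \<eta> *v b) = cinner (tens a \<xi>) (V *v tens b \<eta>)"
  by (simp add: \<rho>w_apply cinner_cr)

lemma L1: "V *v tens f \<eta> = tens f \<eta> \<Longrightarrow> Lw V \<xi> f *v \<eta> = cinner \<xi> f *s \<eta>"
  by (simp add: Lw_apply cl_tens)
lemma L2: "V *v tens f \<eta> = tens f \<eta> \<Longrightarrow> cinner \<eta> (Lw V f \<xi> *v b) = cinner f \<xi> * cinner \<eta> b"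
  by (simp add: L_inner cinner_adj[of _ V] fix_adj cinner_tens)
lemma R1: "V *v tens \<eta> g = tens \<eta> g \<Longrightarrow> \<rho>w V \<xi> g *v \<eta> = cinner \<xi> g *s \<eta>"
  by (simp add: \<rho>w_apply cr_tens)
lemma R2: "V *v tens \<eta> g = tens \<eta> g \<Longrightarrow> cinner \<eta> (\<rho>w V g \<xi> *v b) = cinner g \<xi> * cinner \<eta> b"
  by (simp add: R_inner cinner_adj[of _ V] fix_adj cinner_tens)

lemma Lfix:
  assumes "cinner f f = 1" "Re (cinner x (Lw V f f *v x)) = Re (cinner x x)"
  shows "V *v tens f x = tens f x"
  by (rule fix_crit) (use assms in \<open>simp add: L_inner[symmetric] cinner_tens\<close>)
lemma Rfix:
  assumes "cinner g g = 1" "Re (cinner x (\<rho>w V g g *v x)) = Re (cinner x x)"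
  shows "V *v tens x g = tens x g"
  by (rule fix_crit) (use assms in \<open>simp add: R_inner[symmetric] cinner_tens\<close>)

lemma P_idem:
  assumes "cinner f f = 1" "V *v tens f f = tens f f"
  shows "Lw V f f *v (Lw V f f *v b) = Lw V f f *v b"
  using LI[OF assms(2)] assms by (simp add: cl_tens)
lemma P_range:
  assumes "cinner f f = 1" "V *v tens f f = tens f f"
  shows "V *v tens f (Lw V f f *v b) = tens f (Lw V f f *v b)"
  by (rule Lfix) (use assms P_idem[OF assms] in auto)
lemma Q_idem:
  assumes "cinner g g = 1" "V *v tens g g = tens g g"
  shows "\<rho>w V g g *v (\<rho>w V g g *v b) = \<rho>w V g g *v b"
  using RI[OF assms(2)] assms by (simp add: cr_tens fix_adj)
lemma Q_range:
  assumes "cinner g g = 1" "V *v tens g g = tens g g"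
  shows "V *v tens (\<rho>w V g g *v b) g = tens (\<rho>w V g g *v b) g"
  by (rule Rfix) (use assms Q_idem[OF assms] in auto)

lemma Q_sa:
  assumes "cinner g g = 1" "V *v tens g g = tens g g"
  shows "cinner y (\<rho>w V g g *v x) = cinner (\<rho>w V g g *v y) x"
proof -
  have 1: "cinner (\<rho>w V g g *v y) (\<rho>w V g g *v x) = cinner (\<rho>w V g g *v y) x"
    using R2[OF Q_range[OF assms]] assms by simp
  have 2: "cinner (\<rho>w V g g *v x) (\<rho>w V g g *v y) = cinner (\<rho>w V g g *v x) y"
    using R2[OF Q_range[OF assms]] assms by simp
  show ?thesis using 1 2 cinner_commute by metis
qed

lemma Hup_fix: "V *v tens f x = tens f x \<Longrightarrow> V *v tens f y = tens f y \<Longrightarrow>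
   V *v tens f (x - c *s y) = tens f (x - c *s y)"
  by (simp add: tens_diff_right tens_scale_right mv_diff mv_scale)
lemma Hdown_fix: "V *v tens x g = tens x g \<Longrightarrow> V *v tens y g = tens y g \<Longrightarrow>
   V *v tens (x - c *s y) g = tens (x - c *s y) g"
  by (simp add: tens_diff_left tens_scale_left mv_diff mv_scale)

lemma \<rho>w_scale2: "\<rho>w V \<xi> (c *s \<eta>) *v b = c *s (\<rho>w V \<xi> \<eta> *v b)"
  by (simp add: \<rho>w_apply tens_scale_right mv_scale cr_scale)
lemma Lw_scale1: "Lw V \<xi> \<eta> *v (c *s b) = c *s (Lw V \<xi> \<eta> *v b)"
  by (rule mv_scale)

end


locale MU2 = MU V for V :: "complex^('n::finite\<times>'n)^('n\<times>'n)" +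
  fixes e eh :: "complex^'n"
  assumes mult1: "multiplicity_one V" and e_fix: "fixed_vec V e" and e_unit: "norm e = 1"
    and eh_cofix: "cofixed_vec V eh" and eh_unit: "norm eh = 1"
    and e_eh: "cinner e eh = complex_of_real (1 / sqrt (real CARD('n)))"
begin

lemma ee: "cinner e e = 1" using e_unit by (simp add: cinner_self)
lemma ehh: "cinner eh eh = 1" using eh_unit by (simp add: cinner_self)
lemma e_fixD: "V *v tens e y = tens e y" using e_fix by (simp add: fixed_vec_def)
lemma eh_cofixD: "V *v tens y eh = tens y eh" using eh_cofix by (simp add: cofixed_vec_def)
lemma e_ne0: "e \<noteq> 0" using ee by auto
lemma e_eh_ne0: "cinner e eh \<noteq> 0"
proof -
  have "real CARD('n) > 0" by simp
  then show ?thesis by (simp add: e_eh)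
qed
lemma eh_e: "cinner eh e = complex_of_real (1 / sqrt (real CARD('n)))"
  using e_eh cinner_commute[of eh e] by simp

lemma fixed_span: assumes "fixed_vec V x" shows "x = cinner e x *s e"
proof -
  obtain \<xi> where \<xi>: "\<xi> \<noteq> 0" "{x. fixed_vec V x} = range (\<lambda>c::complex. c *s \<xi>)"
    using mult1 by (auto simp: multiplicity_one_def)
  obtain c0 where c0: "e = c0 *s \<xi>" using \<xi>(2) e_fix by auto
  obtain c where c: "x = c *s \<xi>" using \<xi>(2) assms by auto
  have "c0 \<noteq> 0" using c0 e_ne0 by auto
  then have "x = (c / c0) *s e" by (simp add: c c0 vector_smult_assoc)
  moreover then have "cinner e x = c / c0" by (simp add: cinner_scale_right ee)
  ultimately show ?thesis by simp
qed

lemma He_fixed: assumes "V *v tens x e = tens x e" shows "fixed_vec V x"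
  unfolding fixed_vec_def using P1[OF assms e_fixD e_ne0] by blast

lemma Rlem: "\<rho>w V e e *v y = cinner e y *s e"
proof -
  let ?x = "\<rho>w V e e *v y"
  have "V *v tens ?x e = tens ?x e" using Q_range[OF ee e_fixD] .
  then have "?x = cinner e ?x *s e" by (intro fixed_span He_fixed)
  moreover have "cinner e ?x = cinner e y" using R2[OF e_fixD, of e e y] ee by simp
  ultimately show ?thesis by simp
qed

lemma K_L:
  assumes f1: "cinner f f = 1" and ff: "V *v tens f f = tens f f"
  shows "Lw V f f *v e = cinner f e *s f"
proof (rule cs_eq[OF _ _ f1])
  let ?x = "Lw V f f *v e"
  have xr: "V *v tens f ?x = tens f ?x" by (rule P_range[OF f1 ff])
  have 1: "cinner ?x ?x = cinner ?x e" using L2[OF xr, of f e] f1 by simp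
  have 2: "cinner e ?x = cinner e f * cinner f e"
    by (simp add: L_inner R_inner[symmetric] Rlem cinner_scale_right)
  show "cinner f ?x = cinner f e" using L2[OF ff, of f e] f1 by simp
  show "cinner ?x ?x = cnj (cinner f e) * cinner f e"
    using 1 2 cinner_commute[of ?x e] cinner_commute[of e f] by simp
qed

lemma PD: assumes g1: "cinner g g = 1" and gg: "V *v tens g g = tens g g"
  shows "\<rho>w V e g *v y = cinner e g *s (\<rho>w V g g *v y)"
proof -
  have "\<rho>w V e g *v (\<rho>w V g g *v y) = \<rho>w V e g *v y"
    using RI[of e g g g y, OF e_fixD] gg g1 by (simp add: fix_adj cr_tens)
  moreover have "\<rho>w V e g *v (\<rho>w V g g *v y) = cinner e g *s (\<rho>w V g g *v y)"
    by (rule R1[OF Q_range[OF g1 gg]])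
  ultimately show ?thesis by simp
qed

end


lemma smult_cancel: "(c::complex) \<noteq> 0 \<Longrightarrow> c *s x = c *s y \<Longrightarrow> x = y"
  by (metis (no_types, lifting) vector_smult_assoc vector_smult_lid divide_self_if
      nonzero_divide_eq_eq)

context MU2
begin

lemma pre_D:
  assumes "pre_subgroup V e f"
  shows "cinner f f = 1" "V *v tens f f = tens f f" "cinner f e \<noteq> 0" "cinner e f = cinner f e"
proof -
  have n: "norm f = 1" and im: "Im (cinner f e) = 0" and re: "Re (cinner f e) > 0"
    and fx: "V *v tens f f = tens f f" using assms by (auto simp: pre_subgroup_def)
  show "cinner f f = 1" using n by (simp add: cinner_self)
  show "V *v tens f f = tens f f" by (rule fx)
  show "cinner f e \<noteq> 0" using re by auto
  have "cnj (cinner f e) = cinner f e" using im by (simp add: complex_eq_iff)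
  then show "cinner e f = cinner f e" using cinner_commute[of e f] by simp
qed

lemma star:
  assumes g1: "cinner g g = 1" and gg: "V *v tens g g = tens g g"
  shows "cinner g e * cinner eh g = cinner eh e"
proof -
  have "cinner eh (Lw V g g *v e) = cinner eh e" using L2[OF eh_cofixD[of g], of g e] g1 by simp
  then show ?thesis by (simp add: K_L[OF g1 gg] cinner_scale_right)
qed

lemma Heh_cofix: assumes "V *v tens eh \<xi> = tens eh \<xi>" shows "V *v tens x \<xi> = tens x \<xi>"
  by (rule P1[OF eh_cofixD assms]) (use ehh in auto)

lemma K_rho:
  assumes g1: "cinner g g = 1" and gg: "V *v tens g g = tens g g" and ge: "cinner g e \<noteq> 0"
  shows "\<rho>w V g g *v eh = cinner g eh *s g"
proof -
  let ?P = "Lw V eh eh"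
  have ehf: "V *v tens eh eh = tens eh eh" by (rule eh_cofixD)
  let ?y = "?P *v g"
  let ?k = "cinner eh e / cinner g e"
  have yr: "V *v tens eh ?y = tens eh ?y" by (rule P_range[OF ehh ehf])
  have key: "cinner \<xi> ?y = cinner \<xi> (?k *s eh)" if \<xi>: "V *v tens eh \<xi> = tens eh \<xi>" for \<xi>
  proof -
    have a: "cinner \<xi> ?y = cinner \<xi> g" using L2[OF \<xi>, of eh g] ehh by simp
    have \<xi>g: "V *v tens g \<xi> = tens g \<xi>" by (rule Heh_cofix[OF \<xi>])
    have b: "cinner g e * cinner \<xi> g = cinner \<xi> e"
      using L2[OF \<xi>g, of g e] g1 by (simp add: K_L[OF g1 gg] cinner_scale_right)
    have c: "cinner eh e * cinner \<xi> eh = cinner \<xi> e"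
      using L2[OF \<xi>, of eh e] ehh by (simp add: K_L[OF ehh ehf] cinner_scale_right)
    show ?thesis using a b c ge by (simp add: cinner_scale_right field_simps)
  qed
  have ykeh: "?y = ?k *s eh"
  proof -
    let ?d = "?y - ?k *s eh"
    have dr: "V *v tens eh ?d = tens eh ?d" by (rule Hup_fix[OF yr ehf])
    have "cinner ?d ?d = 0"
      using key[OF dr] by (simp add: cinner_diff_right)
    then show ?thesis by (simp add: cinner_self_eq0)
  qed
  have st: "cinner g e * cinner eh g = cinner eh e" by (rule star[OF g1 gg])
  have kk: "?k = cinner eh g" using st ge by (simp add: field_simps)
  let ?z = "\<rho>w V g g *v eh"
  have zz0: "cinner eh ?z = cinner eh g * cinner g eh"
  proof -
    have "cinner eh ?z = cinner g ?y" by (simp add: R_inner L_inner)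
    also have "\<dots> = ?k * cinner g eh" by (simp add: ykeh cinner_scale_right)
    finally show ?thesis using kk by simp
  qed
  show ?thesis
  proof (rule cs_eq[OF _ _ g1])
    have zr: "V *v tens ?z g = tens ?z g" by (rule Q_range[OF g1 gg])
    have "cinner ?z ?z = cinner ?z eh" using R2[OF zr, of g eh] g1 by simp
    also have "\<dots> = cnj (cinner eh ?z)" by (rule cinner_commute)
    finally show "cinner ?z ?z = cnj (cinner g eh) * cinner g eh"
      using zz0 cinner_commute[of eh g] by simp
    show "cinner g ?z = cinner g eh" using R2[OF gg, of g eh] g1 by simp
  qed
qed

lemma Q_one:
  assumes g1: "cinner g g = 1" and gg: "V *v tens g g = tens g g" and f1: "cinner f f = 1"
    and q: "cinner f (\<rho>w V g g *v f) = 1"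
  shows "V *v tens f g = tens f g"
proof -
  let ?z = "\<rho>w V g g *v f"
  have zr: "V *v tens ?z g = tens ?z g" by (rule Q_range[OF g1 gg])
  have "?z = 1 *s f"
  proof (rule cs_eq[OF _ _ f1])
    have "cinner ?z ?z = cinner ?z f" using R2[OF zr, of g f] g1 by simp
    also have "\<dots> = cnj (cinner f ?z)" by (rule cinner_commute)
    finally show "cinner ?z ?z = cnj 1 * 1" using q by simp
    show "cinner f ?z = 1" by (rule q)
  qed
  then show ?thesis using zr by simp
qed

end


context MU2
begin

lemma tens_scale_fix_down: "V *v tens x g = tens x g \<Longrightarrow> V *v tens (c *s x) g = tens (c *s x) g"
  by (simp add: tens_scale_left mv_scale)
lemma tens_scale_fix_up: "V *v tens f x = tens f x \<Longrightarrow> V *v tens f (c *s x) = tens f (c *s x)"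
  by (simp add: tens_scale_right mv_scale)

lemma part1:
  assumes pf: "pre_subgroup V e f" and pg: "pre_subgroup V e g"
  shows "(V *v tens f g = tens f g) \<longleftrightarrow> Hup V g \<subseteq> Hup V f"
proof
  assume i: "V *v tens f g = tens f g"
  have g0: "g \<noteq> 0" using pre_D(1)[OF pg] by auto
  show "Hup V g \<subseteq> Hup V f" unfolding Hup_def using P1[OF i _ g0] by blast
next
  assume "Hup V g \<subseteq> Hup V f"
  moreover have "g \<in> Hup V g" using pre_D(2)[OF pg] by (simp add: Hup_def)
  ultimately show "V *v tens f g = tens f g" by (auto simp: Hup_def)
qed

lemma part2:
  assumes pf: "pre_subgroup V e f" and pg: "pre_subgroup V e g"
  shows "(V *v tens f g = tens f g) \<longleftrightarrow> Hdown V f \<subseteq> Hdown V g"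
proof
  assume i: "V *v tens f g = tens f g"
  have f0: "f \<noteq> 0" using pre_D(1)[OF pf] by auto
  show "Hdown V f \<subseteq> Hdown V g" unfolding Hdown_def using P1[OF _ i f0] by blast
next
  assume "Hdown V f \<subseteq> Hdown V g"
  moreover have "f \<in> Hdown V f" using pre_D(2)[OF pf] by (simp add: Hdown_def)
  ultimately show "V *v tens f g = tens f g" by (auto simp: Hdown_def)
qed

lemma NZ:
  assumes pf: "pre_subgroup V e f" and pg: "pre_subgroup V e g" and i: "V *v tens f g = tens f g"
  shows "cinner f g \<noteq> 0"
proof
  assume fg0: "cinner f g = 0"
  have gf0: "cinner g f = 0" using fg0 cinner_commute[of g f] by simp
  have "cinner g (Lw V f f *v e) = cinner g e" using L2[OF i, of f e] pre_D(1)[OF pf] by simp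
  then have "cinner f e * cinner g f = cinner g e"
    by (simp add: K_L[OF pre_D(1,2)[OF pf]] cinner_scale_right)
  then show False using gf0 pre_D(3)[OF pg] by simp
qed

lemma part3:
  assumes pf: "pre_subgroup V e f" and pg: "pre_subgroup V e g"
  shows "(V *v tens f g = tens f g) \<longleftrightarrow> Hup2 V f g = Hup V f"
proof
  assume i: "V *v tens f g = tens f g"
  note f1 = pre_D(1)[OF pf] and ff = pre_D(2)[OF pf]
  have inc: "V *v tens f (Lw V f g *v b) = tens f (Lw V f g *v b)" for b
  proof -
    have "Lw V f f *v (Lw V f g *v b) = Lw V f g *v b"
      using LI[of f g f f b, OF i] ff f1 by (simp add: cl_tens)
    then show ?thesis by (intro Lfix[OF f1]) simp
  qed
  have cfg: "cinner f g \<noteq> 0" by (rule NZ[OF pf pg i])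
  have sur: "\<eta> \<in> Hup2 V f g" if \<eta>: "V *v tens f \<eta> = tens f \<eta>" for \<eta>
  proof -
    let ?y = "Lw V f g *v \<eta>"
    let ?d = "?y - cinner f g *s \<eta>"
    have dr: "V *v tens f ?d = tens f ?d" by (rule Hup_fix[OF inc \<eta>])
    have "cinner ?d ?y = cinner f g * cinner ?d \<eta>" using L2[OF dr, of g \<eta>] by simp
    then have "cinner ?d ?d = 0" by (simp add: cinner_diff_right cinner_scale_right)
    then have y: "?y = cinner f g *s \<eta>" by (simp add: cinner_self_eq0)
    have "Lw V f g *v ((1 / cinner f g) *s \<eta>) = \<eta>"
      using cfg by (simp add: mv_scale y vector_smult_assoc)
    then show ?thesis unfolding Hup2_def by (metis rangeI)
  qed
  show "Hup2 V f g = Hup V f"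
    using inc sur by (auto simp: Hup2_def Hup_def)
next
  assume r: "Hup2 V f g = Hup V f"
  note f1 = pre_D(1)[OF pf] and ff = pre_D(2)[OF pf] and gg = pre_D(2)[OF pg]
  have "f \<in> Hup V f" using ff by (simp add: Hup_def)
  then obtain b where fb: "f = Lw V f g *v b" using r by (auto simp: Hup2_def)
  have "cinner f f = cinner f g * cinner f b" using L2[OF ff, of g b] fb by simp
  then have cfg: "cinner f g \<noteq> 0" using f1 by auto
  have "Lw V f g *v g = cinner f g *s g" by (simp add: Lw_apply gg cl_tens)
  then have "cinner f g *s g \<in> Hup V f" using r by (metis Hup2_def rangeI)
  then have "cinner f g *s (V *v tens f g) = cinner f g *s tens f g"
    by (simp add: Hup_def tens_scale_right mv_scale)
  then show "V *v tens f g = tens f g" using smult_cancel[OF cfg] by blast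
qed

end


context MU2
begin

lemma cnj_real_eq: "cinner e g = cinner g e \<Longrightarrow> cnj (cinner e g) = cinner e g"
  using cinner_commute[of e g] by simp

lemma part4:
  assumes pf: "pre_subgroup V e f" and pg: "pre_subgroup V e g"
  shows "(V *v tens f g = tens f g) \<longleftrightarrow> Hup2 V g f = Hup V f"
proof
  assume i: "V *v tens f g = tens f g"
  note f1 = pre_D(1)[OF pf] and ff = pre_D(2)[OF pf]
  have inc: "V *v tens f (Lw V g f *v b) = tens f (Lw V g f *v b)" for b
  proof -
    have "Lw V f f *v (Lw V g f *v b) = Lw V g f *v b"
      using LI[of f f f g b, OF ff] i f1 by (simp add: cl_tens)
    then show ?thesis by (intro Lfix[OF f1]) simp
  qed
  have cgf: "cinner g f \<noteq> 0" using NZ[OF pf pg i] cinner_commute[of g f] by auto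
  have sur: "\<eta> \<in> Hup2 V g f" if \<eta>: "V *v tens f \<eta> = tens f \<eta>" for \<eta>
  proof -
    have "Lw V g f *v ((1 / cinner g f) *s \<eta>) = \<eta>"
      using cgf by (simp add: mv_scale L1[OF \<eta>] vector_smult_assoc)
    then show ?thesis unfolding Hup2_def by (metis rangeI)
  qed
  show "Hup2 V g f = Hup V f"
    using inc sur by (auto simp: Hup2_def Hup_def)
next
  assume r: "Hup2 V g f = Hup V f"
  note f1 = pre_D(1)[OF pf] and ff = pre_D(2)[OF pf] and g1 = pre_D(1)[OF pg] and gg = pre_D(2)[OF pg]
  let ?u = "cl f (V *v tens f g)"
  have x: "V *v tens f (Lw V g f *v e) = tens f (Lw V g f *v e)"
    using r by (auto simp: Hup2_def Hup_def)
  have "Lw V ?u f *v e = Lw V f f *v (Lw V g f *v e)"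
    using LI[of f f f g e, OF ff] by simp
  also have "\<dots> = Lw V g f *v e" using L1[OF x, of f] f1 by simp
  finally have eq: "Lw V ?u f *v e = Lw V g f *v e" .
  have ce: "cinner e (Lw V \<xi> f *v e) = cinner e f * cinner \<xi> e" for \<xi>
    by (simp add: L_inner R_inner[symmetric] Rlem cinner_scale_right)
  have "cinner e f * cinner ?u e = cinner e f * cinner g e"
    using arg_cong[OF eq, of "cinner e"] by (simp add: ce)
  then have ue: "cinner ?u e = cinner g e" using pre_D(3,4)[OF pf] by simp
  have "cinner e ?u = cinner e g * cinner f (\<rho>w V g g *v f)"
    by (simp add: cinner_cl R_inner[symmetric] PD[OF g1 gg] cinner_scale_right)
  then have "cnj (cinner e g) * cnj (cinner f (\<rho>w V g g *v f)) = cinner g e"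
    using ue cinner_commute[of ?u e] by simp
  moreover have "cnj (cinner e g) = cinner g e"
    using pre_D(4)[OF pg] cinner_commute[of e g] by simp
  ultimately have "cnj (cinner f (\<rho>w V g g *v f)) = 1" using pre_D(3)[OF pg] by simp
  then have "cinner f (\<rho>w V g g *v f) = 1" by (metis complex_cnj_cnj complex_cnj_one)
  then show "V *v tens f g = tens f g" by (rule Q_one[OF g1 gg f1])
qed

lemma rho_fg:
  assumes pf: "pre_subgroup V e f" and pg: "pre_subgroup V e g" and i: "V *v tens f g = tens f g"
  shows "\<rho>w V f g *v b = cinner f g *s (\<rho>w V g g *v b)"
proof -
  note g1 = pre_D(1)[OF pg] and gg = pre_D(2)[OF pg]
  have "\<rho>w V f g *v (\<rho>w V g g *v b) = \<rho>w V f g *v b"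
    using RI[of f g g g b, OF i] gg g1 by (simp add: fix_adj cr_tens)
  moreover have "\<rho>w V f g *v (\<rho>w V g g *v b) = cinner f g *s (\<rho>w V g g *v b)"
    by (rule R1[OF Q_range[OF g1 gg]])
  ultimately show ?thesis by simp
qed

lemma part5:
  assumes pf: "pre_subgroup V e f" and pg: "pre_subgroup V e g"
  shows "(V *v tens f g = tens f g) \<longleftrightarrow> Hdown2 V f g = Hdown V g"
proof
  assume i: "V *v tens f g = tens f g"
  note g1 = pre_D(1)[OF pg] and gg = pre_D(2)[OF pg]
  have inc: "V *v tens (\<rho>w V f g *v b) g = tens (\<rho>w V f g *v b) g" for b
    unfolding rho_fg[OF pf pg i] by (rule tens_scale_fix_down[OF Q_range[OF g1 gg]])
  have cfg: "cinner f g \<noteq> 0" by (rule NZ[OF pf pg i])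
  have sur: "\<eta> \<in> Hdown2 V f g" if \<eta>: "V *v tens \<eta> g = tens \<eta> g" for \<eta>
  proof -
    have "\<rho>w V f g *v ((1 / cinner f g) *s \<eta>) = \<eta>"
      using cfg by (simp add: mv_scale R1[OF \<eta>] vector_smult_assoc)
    then show ?thesis unfolding Hdown2_def by (metis rangeI)
  qed
  show "Hdown2 V f g = Hdown V g"
    using inc sur by (auto simp: Hdown2_def Hdown_def)
next
  assume r: "Hdown2 V f g = Hdown V g"
  note f1 = pre_D(1)[OF pf] and ff = pre_D(2)[OF pf] and g1 = pre_D(1)[OF pg] and gg = pre_D(2)[OF pg]
  have ceg: "cinner e g \<noteq> 0" using pre_D(3,4)[OF pg] by simp
  have rr: "\<rho>w V f g *v b = cinner f g *s (\<rho>w V g g *v b)" for b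
  proof -
    have inH: "V *v tens (\<rho>w V f g *v b) g = tens (\<rho>w V f g *v b) g"
      using r by (auto simp: Hdown2_def Hdown_def)
    have q: "\<rho>w V g g *v (\<rho>w V f g *v b) = \<rho>w V f g *v b" using R1[OF inH, of g] g1 by simp
    have "\<rho>w V e g *v (\<rho>w V f g *v b) = \<rho>w V e (cr f (cadj V *v tens g g)) *v b"
      by (rule RI[of e f g g b, OF e_fixD])
    also have "\<dots> = cinner f g *s (\<rho>w V e g *v b)"
      by (simp add: fix_adj[OF gg] cr_tens \<rho>w_scale2)
    finally have "cinner e g *s (\<rho>w V f g *v b) = cinner f g *s (cinner e g *s (\<rho>w V g g *v b))"
      by (simp add: PD[OF g1 gg] q)
    then have "cinner e g *s (\<rho>w V f g *v b) = cinner e g *s (cinner f g *s (\<rho>w V g g *v b))"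
      by (simp add: vector_smult_assoc mult.commute)
    then show ?thesis using smult_cancel[OF ceg] by blast
  qed
  have "cinner f (\<rho>w V f g *v f) = cinner f g"
    by (simp add: R_inner cinner_adj[of _ V] fix_adj[OF ff] cinner_tens f1)
  then have fq: "cinner f g = cinner f g * cinner f (\<rho>w V g g *v f)"
    by (simp add: rr cinner_scale_right)
  show "V *v tens f g = tens f g"
  proof (cases "cinner f g = 0")
    case True
    have "g \<in> Hdown V g" using gg by (simp add: Hdown_def)
    then obtain b where "g = \<rho>w V f g *v b" using r by (auto simp: Hdown2_def)
    then have "g = 0" using rr True by simp
    then show ?thesis using g1 by simp
  next
    case False
    then have "cinner f (\<rho>w V g g *v f) = 1" using fq by simp
    then show ?thesis by (rule Q_one[OF g1 gg f1])
  qed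
qed

end


context MU2
begin

lemma part6:
  assumes pf: "pre_subgroup V e f" and pg: "pre_subgroup V e g"
  shows "(V *v tens f g = tens f g) \<longleftrightarrow> Hdown2 V g f = Hdown V g"
proof
  assume i: "V *v tens f g = tens f g"
  note f1 = pre_D(1)[OF pf] and ff = pre_D(2)[OF pf] and g1 = pre_D(1)[OF pg] and gg = pre_D(2)[OF pg]
  have ge: "cinner g e \<noteq> 0" by (rule pre_D(3)[OF pg])
  have ceg: "cinner e g \<noteq> 0" using pre_D(3,4)[OF pg] by simp
  have cfg: "cinner f g \<noteq> 0" by (rule NZ[OF pf pg i])
  have cgeh: "cinner g eh \<noteq> 0"
  proof
    assume "cinner g eh = 0"
    then have "cinner eh g = 0" using cinner_commute[of eh g] by simp
    then show False using star[OF g1 gg] e_eh_ne0 cinner_commute[of eh e] by auto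
  qed
  let ?k = "cnj (cinner f g) * cinner g eh"
  have k0: "?k \<noteq> 0" using cfg cgeh by simp
  have phi: "cr g (cadj V *v tens eh f) = ?k *s g"
  proof (rule vec_eq_cinner)
    fix x
    have "cinner x (cr g (cadj V *v tens eh f)) = cnj (cinner eh (\<rho>w V f g *v x))"
      by (simp add: cinner_cr inner_Vadj R_inner cinner_commute[of "V *v tens x g"])
    also have "\<dots> = cnj (cinner f g * cinner (\<rho>w V g g *v eh) x)"
      by (simp add: rho_fg[OF pf pg i] cinner_scale_right Q_sa[OF g1 gg])
    also have "\<dots> = cinner x (?k *s g)"
      by (simp add: K_rho[OF g1 gg ge] cinner_scale_left cinner_scale_right cinner_commute[of g x])
    finally show "cinner x (cr g (cadj V *v tens eh f)) = cinner x (?k *s g)" .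
  qed
  have reh: "\<rho>w V e eh *v y = cinner e eh *s y" for y
    by (simp add: \<rho>w_apply eh_cofixD cr_tens)
  have rr: "\<rho>w V g f *v b = (?k * cinner e g / cinner e eh) *s (\<rho>w V g g *v b)" for b
  proof -
    have "cinner e eh *s (\<rho>w V g f *v b) = \<rho>w V e eh *v (\<rho>w V g f *v b)" by (simp add: reh)
    also have "\<dots> = \<rho>w V e (cr g (cadj V *v tens eh f)) *v b" by (rule RI[of e g eh f b, OF e_fixD])
    also have "\<dots> = (?k * cinner e g) *s (\<rho>w V g g *v b)"
      by (simp add: phi \<rho>w_scale2 PD[OF g1 gg] vector_smult_assoc)
    finally have "cinner e eh *s (\<rho>w V g f *v b) = (?k * cinner e g) *s (\<rho>w V g g *v b)" .
    then have "cinner e eh *s (\<rho>w V g f *v b) = cinner e eh *s ((?k * cinner e g / cinner e eh) *s (\<rho>w V g g *v b))"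
      using e_eh_ne0 by (simp add: vector_smult_assoc)
    then show ?thesis using smult_cancel[OF e_eh_ne0] by blast
  qed
  have inc: "V *v tens (\<rho>w V g f *v b) g = tens (\<rho>w V g f *v b) g" for b
    unfolding rr by (rule tens_scale_fix_down[OF Q_range[OF g1 gg]])
  have sur: "\<eta> \<in> Hdown2 V g f" if \<eta>: "V *v tens \<eta> g = tens \<eta> g" for \<eta>
  proof -
    have q: "\<rho>w V g g *v \<eta> = \<eta>" using R1[OF \<eta>, of g] g1 by simp
    have "\<rho>w V g f *v ((cinner e eh / (?k * cinner e g)) *s \<eta>) = \<eta>"
      using k0 ceg e_eh_ne0 by (simp add: mv_scale rr q vector_smult_assoc)
    then show ?thesis unfolding Hdown2_def by (metis rangeI)
  qed
  show "Hdown2 V g f = Hdown V g"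
    using inc sur by (auto simp: Hdown2_def Hdown_def)
next
  assume r: "Hdown2 V g f = Hdown V g"
  note f1 = pre_D(1)[OF pf] and ff = pre_D(2)[OF pf] and g1 = pre_D(1)[OF pg] and gg = pre_D(2)[OF pg]
  have "g \<in> Hdown V g" using gg by (simp add: Hdown_def)
  then obtain b where gb: "g = \<rho>w V g f *v b" using r by (auto simp: Hdown2_def)
  have "cinner g g = cinner g f * cinner g b" using R2[OF gg, of f b] gb by simp
  then have cgf: "cinner g f \<noteq> 0" using g1 by auto
  have "\<rho>w V g f *v f = cinner g f *s f" by (simp add: \<rho>w_apply ff cr_tens)
  then have "cinner g f *s f \<in> Hdown V g" using r by (metis Hdown2_def rangeI)
  then have "cinner g f *s (V *v tens f g) = cinner g f *s tens f g"
    by (simp add: Hdown_def tens_scale_left mv_scale)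
  then show "V *v tens f g = tens f g" using smult_cancel[OF cgf] by blast
qed

lemma antisym:
  assumes pf: "pre_subgroup V e f" and pg: "pre_subgroup V e g"
    and gf: "V *v tens f g = tens f g" and fg: "V *v tens g f = tens g f"
  shows "f = g"
proof -
  note f1 = pre_D(1)[OF pf] and ff = pre_D(2)[OF pf] and g1 = pre_D(1)[OF pg] and gg = pre_D(2)[OF pg]
  have s1: "Hup V g \<subseteq> Hup V f" using part1[OF pf pg] gf by simp
  have s2: "Hup V f \<subseteq> Hup V g" using part1[OF pg pf] fg by simp
  let ?x = "Lw V f f *v e" and ?x' = "Lw V g g *v e"
  let ?d = "?x - ?x'"
  have xf: "?x \<in> Hup V f" using P_range[OF f1 ff] by (simp add: Hup_def)
  have xg: "?x' \<in> Hup V f" using P_range[OF g1 gg] s1 by (auto simp: Hup_def)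
  have df: "V *v tens f ?d = tens f ?d" using Hup_fix[of f ?x ?x' 1] xf xg by (simp add: Hup_def)
  have dg: "V *v tens g ?d = tens g ?d" using df s2 by (auto simp: Hup_def)
  have "cinner ?d ?x = cinner ?d e" using L2[OF df, of f e] f1 by simp
  moreover have "cinner ?d ?x' = cinner ?d e" using L2[OF dg, of g e] g1 by simp
  ultimately have "cinner ?d ?d = 0" by (simp add: cinner_diff_right)
  then have "?x = ?x'" by (simp add: cinner_self_eq0)
  then have eq: "cinner f e *s f = cinner g e *s g" by (simp add: K_L[OF f1 ff] K_L[OF g1 gg])
  define r where "r = Re (cinner f e)"
  define s where "s = Re (cinner g e)"
  have r: "cinner f e = complex_of_real r" "r > 0"
    using pf by (auto simp: pre_subgroup_def r_def complex_eq_iff)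
  have s: "cinner g e = complex_of_real s" "s > 0"
    using pg by (auto simp: pre_subgroup_def s_def complex_eq_iff)
  have "cinner (cinner f e *s f) (cinner f e *s f) = cinner (cinner g e *s g) (cinner g e *s g)"
    by (simp add: eq)
  then have "complex_of_real (r * r) = complex_of_real (s * s)"
    by (simp add: cinner_scale_left cinner_scale_right f1 g1 r s)
  then have "r * r = s * s" by (simp only: of_real_eq_iff)
  then have "r^2 = s^2" by (simp add: power2_eq_square)
  then have "r = s" using r(2) s(2) by (simp add: power2_eq_iff_nonneg)
  then have "cinner f e = cinner g e" using r s by simp
  then show "f = g" using eq smult_cancel[OF pre_D(3)[OF pf]] by simp
qed
end


context MU2
begin
lemma main:
  shows "(\<forall>f g. pre_subgroup V e f \<and> pre_subgroup V e g \<longrightarrow>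
            ((V *v tens f g = tens f g \<longleftrightarrow> Hup V g \<subseteq> Hup V f)
           \<and> (V *v tens f g = tens f g \<longleftrightarrow> Hdown V f \<subseteq> Hdown V g)
           \<and> (V *v tens f g = tens f g \<longleftrightarrow> Hup2 V f g = Hup V f)
           \<and> (V *v tens f g = tens f g \<longleftrightarrow> Hup2 V g f = Hup V f)
           \<and> (V *v tens f g = tens f g \<longleftrightarrow> Hdown2 V f g = Hdown V g)
           \<and> (V *v tens f g = tens f g \<longleftrightarrow> Hdown2 V g f = Hdown V g)))
       \<and> (\<forall>f. pre_subgroup V e f \<longrightarrow> sg_le V f f)
       \<and> (\<forall>f g. pre_subgroup V e f \<and> pre_subgroup V e g \<and> sg_le V g f \<and> sg_le V f g \<longrightarrow> f = g)
       \<and> (\<forall>f g h. pre_subgroup V e f \<and> pre_subgroup V e g \<and> pre_subgroup V e h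
                  \<and> sg_le V h g \<and> sg_le V g f \<longrightarrow> sg_le V h f)
       \<and> pre_subgroup V e e \<and> (\<forall>g. pre_subgroup V e g \<longrightarrow> sg_le V g e)
       \<and> pre_subgroup V e eh \<and> (\<forall>g. pre_subgroup V e g \<longrightarrow> sg_le V eh g)"
proof (intro conjI allI impI)
  fix f g assume "pre_subgroup V e f \<and> pre_subgroup V e g"
  then have pf: "pre_subgroup V e f" and pg: "pre_subgroup V e g" by auto
  show "V *v tens f g = tens f g \<longleftrightarrow> Hup V g \<subseteq> Hup V f" by (rule part1[OF pf pg])
  show "V *v tens f g = tens f g \<longleftrightarrow> Hdown V f \<subseteq> Hdown V g" by (rule part2[OF pf pg])
  show "V *v tens f g = tens f g \<longleftrightarrow> Hup2 V f g = Hup V f" by (rule part3[OF pf pg])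
  show "V *v tens f g = tens f g \<longleftrightarrow> Hup2 V g f = Hup V f" by (rule part4[OF pf pg])
  show "V *v tens f g = tens f g \<longleftrightarrow> Hdown2 V f g = Hdown V g" by (rule part5[OF pf pg])
  show "V *v tens f g = tens f g \<longleftrightarrow> Hdown2 V g f = Hdown V g" by (rule part6[OF pf pg])
next
  fix f assume "pre_subgroup V e f"
  then show "sg_le V f f" by (simp add: sg_le_def pre_D(2))
next
  fix f g assume "pre_subgroup V e f \<and> pre_subgroup V e g \<and> sg_le V g f \<and> sg_le V f g"
  then show "f = g" using antisym by (auto simp: sg_le_def)
next
  fix f g h assume a: "pre_subgroup V e f \<and> pre_subgroup V e g \<and> pre_subgroup V e h
                  \<and> sg_le V h g \<and> sg_le V g f"
  then have g0: "g \<noteq> 0" using pre_D(1)[of g] by auto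
  show "sg_le V h f" using a P1[OF _ _ g0, of f h] by (simp add: sg_le_def)
next
  show "pre_subgroup V e e" using e_unit ee e_fixD by (simp add: pre_subgroup_def)
next
  fix g assume "pre_subgroup V e g"
  show "sg_le V g e" by (simp add: sg_le_def e_fixD)
next
  have "real CARD('n) > 0" by simp
  then show "pre_subgroup V e eh" using eh_unit eh_e eh_cofixD by (simp add: pre_subgroup_def)
next
  fix g assume "pre_subgroup V e g"
  show "sg_le V eh g" by (simp add: sg_le_def eh_cofixD)
qed
end

theorem proposition3p7:
  fixes V :: "complex^('n::finite\<times>'n)^('n\<times>'n)" and e ehat :: "complex^'n"
  assumes mu: "multiplicative_unitary V"
    and mult1: "multiplicity_one V"
    and e_fix: "fixed_vec V e" and e_unit: "norm e = 1"
    and eh_cofix: "cofixed_vec V ehat" and eh_unit: "norm ehat = 1"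
    and e_eh: "cinner e ehat = complex_of_real (1 / sqrt (real CARD('n)))"
  shows "(\<forall>f g. pre_subgroup V e f \<and> pre_subgroup V e g \<longrightarrow>
            ((V *v tens f g = tens f g \<longleftrightarrow> Hup V g \<subseteq> Hup V f)
           \<and> (V *v tens f g = tens f g \<longleftrightarrow> Hdown V f \<subseteq> Hdown V g)
           \<and> (V *v tens f g = tens f g \<longleftrightarrow> Hup2 V f g = Hup V f)
           \<and> (V *v tens f g = tens f g \<longleftrightarrow> Hup2 V g f = Hup V f)
           \<and> (V *v tens f g = tens f g \<longleftrightarrow> Hdown2 V f g = Hdown V g)
           \<and> (V *v tens f g = tens f g \<longleftrightarrow> Hdown2 V g f = Hdown V g)))
       \<and> (\<forall>f. pre_subgroup V e f \<longrightarrow> sg_le V f f)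
       \<and> (\<forall>f g. pre_subgroup V e f \<and> pre_subgroup V e g \<and> sg_le V g f \<and> sg_le V f g \<longrightarrow> f = g)
       \<and> (\<forall>f g h. pre_subgroup V e f \<and> pre_subgroup V e g \<and> pre_subgroup V e h
                  \<and> sg_le V h g \<and> sg_le V g f \<longrightarrow> sg_le V h f)
       \<and> pre_subgroup V e e \<and> (\<forall>g. pre_subgroup V e g \<longrightarrow> sg_le V g e)
       \<and> pre_subgroup V e ehat \<and> (\<forall>g. pre_subgroup V e g \<longrightarrow> sg_le V ehat g)"
proof -
  interpret MU2 V e ehat
    using assms by (unfold_locales) (auto simp: multiplicative_unitary_def)
  show ?thesis by (rule main)
qed


end
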